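(* Let $\mathcal T$ and $\mathcal S$ be triangulated categories and let $T:\mathcal S\to\mathcal T$ be a triangle functor. Suppose $T$ has a left (respectively right) adjoint $S$. Let $M$ be an object of $\mathcal S$. Then the following are equivalent: (1) $M$ is $T$-relative projective (respectively injective); (2) $M$ is in $\mathrm{add}(\mathrm{im}(S))$; (3) $M$ is a direct factor of $S(L)$ for some object $L$ of $\mathcal T$; (4) $M$ is a direct factor of $ST(M)$.
   Context: An object $Q$ of $\mathcal S$ is $T$-relative projective if the natural transformation $\mathcal S(Q,-)\to\mathcal T(TQ,T-)$ induced by $T$ is injective, and $T$-relative injective if the natural transformation $\mathcal S(-,Q)\to\mathcal T(T-,TQ)$ induced by $T$ is injective. $\mathrm{add}(\mathrm{im}(S))$ is the full subcategory of direct summands of finite direct sums of objects in the image of $S$. *)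

theory Defs
  imports Main
begin

text \<open>A category is given by a set of objects, hom-sets (sets of elements of a
morphism type), a total composition operation (only used on composable arrows;
comp g f means g after f), and identities.\<close>

record ('o,'m) precat =
  Obj  :: "'o set"
  Hom  :: "'o \<Rightarrow> 'o \<Rightarrow> 'm set"
  comp :: "'m \<Rightarrow> 'm \<Rightarrow> 'm"
  idm  :: "'o \<Rightarrow> 'm"
  madd :: "'m \<Rightarrow> 'm \<Rightarrow> 'm"
  mzero :: "'o \<Rightarrow> 'o \<Rightarrow> 'm"
  mneg :: "'m \<Rightarrow> 'm"

record ('o,'m) tricat = "('o,'m) precat" +
  shO  :: "'o \<Rightarrow> 'o"
  shM  :: "'m \<Rightarrow> 'm"
  dist :: "('o \<times> 'o \<times> 'o \<times> 'm \<times> 'm \<times> 'm) set"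

record ('a,'b,'c,'d) fnct =
  fo :: "'a \<Rightarrow> 'c"
  fm :: "'b \<Rightarrow> 'd"

definition category :: "('o,'m,'x) precat_scheme \<Rightarrow> bool" where
  "category C \<longleftrightarrow>
     (\<forall>a\<in>Obj C. idm C a \<in> Hom C a a) \<and>
     (\<forall>a\<in>Obj C. \<forall>b\<in>Obj C. \<forall>c\<in>Obj C. \<forall>f\<in>Hom C a b. \<forall>g\<in>Hom C b c.
        comp C g f \<in> Hom C a c) \<and>
     (\<forall>a\<in>Obj C. \<forall>b\<in>Obj C. \<forall>f\<in>Hom C a b.
        comp C (idm C b) f = f \<and> comp C f (idm C a) = f) \<and>
     (\<forall>a\<in>Obj C. \<forall>b\<in>Obj C. \<forall>c\<in>Obj C. \<forall>d\<in>Obj C.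
      \<forall>f\<in>Hom C a b. \<forall>g\<in>Hom C b c. \<forall>h\<in>Hom C c d.
        comp C h (comp C g f) = comp C (comp C h g) f)"

definition preadditive :: "('o,'m,'x) precat_scheme \<Rightarrow> bool" where
  "preadditive C \<longleftrightarrow> category C \<and>
     (\<forall>a\<in>Obj C. \<forall>b\<in>Obj C.
        mzero C a b \<in> Hom C a b \<and>
        (\<forall>f\<in>Hom C a b. \<forall>g\<in>Hom C a b. madd C f g \<in> Hom C a b) \<and>
        (\<forall>f\<in>Hom C a b. mneg C f \<in> Hom C a b) \<and>
        (\<forall>f\<in>Hom C a b. \<forall>g\<in>Hom C a b. \<forall>h\<in>Hom C a b.
            madd C (madd C f g) h = madd C f (madd C g h)) \<and>
        (\<forall>f\<in>Hom C a b. \<forall>g\<in>Hom C a b. madd C f g = madd C g f) \<and>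
        (\<forall>f\<in>Hom C a b. madd C f (mzero C a b) = f) \<and>
        (\<forall>f\<in>Hom C a b. madd C f (mneg C f) = mzero C a b)) \<and>
     (\<forall>a\<in>Obj C. \<forall>b\<in>Obj C. \<forall>c\<in>Obj C. \<forall>f\<in>Hom C a b. \<forall>f'\<in>Hom C a b.
      \<forall>g\<in>Hom C b c. \<forall>g'\<in>Hom C b c.
        comp C (madd C g g') f = madd C (comp C g f) (comp C g' f) \<and>
        comp C g (madd C f f') = madd C (comp C g f) (comp C g f'))"

definition biprod :: "('o,'m,'x) precat_scheme \<Rightarrow> 'o \<Rightarrow> 'o \<Rightarrow> 'o \<Rightarrow>
    'm \<Rightarrow> 'm \<Rightarrow> 'm \<Rightarrow> 'm \<Rightarrow> bool" where
  "biprod C X A B i p j q \<longleftrightarrow>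
     X \<in> Obj C \<and> A \<in> Obj C \<and> B \<in> Obj C \<and>
     i \<in> Hom C A X \<and> p \<in> Hom C X A \<and> j \<in> Hom C B X \<and> q \<in> Hom C X B \<and>
     comp C p i = idm C A \<and> comp C q j = idm C B \<and>
     comp C p j = mzero C B A \<and> comp C q i = mzero C A B \<and>
     madd C (comp C i p) (comp C j q) = idm C X"

definition additive :: "('o,'m,'x) precat_scheme \<Rightarrow> bool" where
  "additive C \<longleftrightarrow> preadditive C \<and>
     (\<exists>z\<in>Obj C. idm C z = mzero C z z) \<and>
     (\<forall>a\<in>Obj C. \<forall>b\<in>Obj C. \<exists>X i p j q. biprod C X a b i p j q)"

definition iso :: "('o,'m,'x) precat_scheme \<Rightarrow> 'm \<Rightarrow> 'o \<Rightarrow> 'o \<Rightarrow> bool" where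
  "iso C f a b \<longleftrightarrow> f \<in> Hom C a b \<and>
     (\<exists>g\<in>Hom C b a. comp C g f = idm C a \<and> comp C f g = idm C b)"

definition is_functor :: "('a,'b,'x) precat_scheme \<Rightarrow> ('c,'d,'y) precat_scheme \<Rightarrow>
    ('a,'b,'c,'d) fnct \<Rightarrow> bool" where
  "is_functor C D F \<longleftrightarrow>
     (\<forall>a\<in>Obj C. fo F a \<in> Obj D) \<and>
     (\<forall>a\<in>Obj C. \<forall>b\<in>Obj C. \<forall>f\<in>Hom C a b. fm F f \<in> Hom D (fo F a) (fo F b)) \<and>
     (\<forall>a\<in>Obj C. fm F (idm C a) = idm D (fo F a)) \<and>
     (\<forall>a\<in>Obj C. \<forall>b\<in>Obj C. \<forall>c\<in>Obj C. \<forall>f\<in>Hom C a b. \<forall>g\<in>Hom C b c.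
        fm F (comp C g f) = comp D (fm F g) (fm F f))"

definition additive_functor :: "('a,'b,'x) precat_scheme \<Rightarrow> ('c,'d,'y) precat_scheme \<Rightarrow>
    ('a,'b,'c,'d) fnct \<Rightarrow> bool" where
  "additive_functor C D F \<longleftrightarrow> is_functor C D F \<and>
     (\<forall>a\<in>Obj C. \<forall>b\<in>Obj C. \<forall>f\<in>Hom C a b. \<forall>g\<in>Hom C a b.
        fm F (madd C f g) = madd D (fm F f) (fm F g))"

definition shiftF :: "('o,'m,'x) tricat_scheme \<Rightarrow> ('o,'m,'o,'m) fnct" where
  "shiftF C = \<lparr>fo = shO C, fm = shM C\<rparr>"

definition is_triangle :: "('o,'m,'x) tricat_scheme \<Rightarrow>
    'o \<times> 'o \<times> 'o \<times> 'm \<times> 'm \<times> 'm \<Rightarrow> bool" where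
  "is_triangle C t = (case t of (X,Y,Z,f,g,h) \<Rightarrow>
     X \<in> Obj C \<and> Y \<in> Obj C \<and> Z \<in> Obj C \<and>
     f \<in> Hom C X Y \<and> g \<in> Hom C Y Z \<and> h \<in> Hom C Z (shO C X))"

text \<open>Triangulated category (Verdier's axioms TR1--TR4, octahedral axiom in the
form of the Stacks project, Tag 05QK); the shift is an additive auto-equivalence.\<close>
definition triangulated :: "('o,'m,'x) tricat_scheme \<Rightarrow> bool" where
  "triangulated C \<longleftrightarrow> additive C \<and>
     additive_functor C C (shiftF C) \<and>
     (\<forall>a\<in>Obj C. \<forall>b\<in>Obj C. bij_betw (shM C) (Hom C a b) (Hom C (shO C a) (shO C b))) \<and>
     (\<forall>b\<in>Obj C. \<exists>a\<in>Obj C. \<exists>f. iso C f (shO C a) b) \<and>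
     (\<forall>t\<in>dist C. is_triangle C t) \<and>
     \<comment> \<open>closed under isomorphisms of triangles\<close>
     (\<forall>X Y Z f g h X' Y' Z' f' g' h' u v w.
        (X,Y,Z,f,g,h) \<in> dist C \<longrightarrow> is_triangle C (X',Y',Z',f',g',h') \<longrightarrow>
        iso C u X X' \<longrightarrow> iso C v Y Y' \<longrightarrow> iso C w Z Z' \<longrightarrow>
        comp C v f = comp C f' u \<longrightarrow> comp C w g = comp C g' v \<longrightarrow>
        comp C (shM C u) h = comp C h' w \<longrightarrow>
        (X',Y',Z',f',g',h') \<in> dist C) \<and>
     \<comment> \<open>TR1\<close>
     (\<forall>X\<in>Obj C. \<forall>z\<in>Obj C. idm C z = mzero C z z \<longrightarrow>
        (X, X, z, idm C X, mzero C X z, mzero C z (shO C X)) \<in> dist C) \<and>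
     (\<forall>X\<in>Obj C. \<forall>Y\<in>Obj C. \<forall>f\<in>Hom C X Y. \<exists>Z g h. (X,Y,Z,f,g,h) \<in> dist C) \<and>
     \<comment> \<open>TR2 (rotation)\<close>
     (\<forall>X Y Z f g h. is_triangle C (X,Y,Z,f,g,h) \<longrightarrow>
        ((X,Y,Z,f,g,h) \<in> dist C \<longleftrightarrow>
         (Y, Z, shO C X, g, h, mneg C (shM C f)) \<in> dist C)) \<and>
     \<comment> \<open>TR3 (morphisms of triangles)\<close>
     (\<forall>X Y Z f g h X' Y' Z' f' g' h' u v.
        (X,Y,Z,f,g,h) \<in> dist C \<longrightarrow> (X',Y',Z',f',g',h') \<in> dist C \<longrightarrow>
        u \<in> Hom C X X' \<longrightarrow> v \<in> Hom C Y Y' \<longrightarrow> comp C v f = comp C f' u \<longrightarrow>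
        (\<exists>w\<in>Hom C Z Z'. comp C w g = comp C g' v \<and>
                          comp C (shM C u) h = comp C h' w)) \<and>
     \<comment> \<open>TR4 (octahedral axiom)\<close>
     (\<forall>X Y Z f g Q1 p1 d1 Q2 p2 d2 Q3 p3 d3.
        f \<in> Hom C X Y \<longrightarrow> g \<in> Hom C Y Z \<longrightarrow>
        (X,Y,Q1,f,p1,d1) \<in> dist C \<longrightarrow>
        (X,Z,Q2,comp C g f,p2,d2) \<in> dist C \<longrightarrow>
        (Y,Z,Q3,g,p3,d3) \<in> dist C \<longrightarrow>
        (\<exists>a\<in>Hom C Q1 Q2. \<exists>b\<in>Hom C Q2 Q3.
           (Q1,Q2,Q3,a,b,comp C (shM C p1) d3) \<in> dist C \<and>
           comp C a p1 = comp C p2 g \<and> comp C d2 a = d1 \<and>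
           comp C b p2 = p3 \<and> comp C d3 b = comp C (shM C f) d2))"

definition triangle_functor :: "('a,'b,'x) tricat_scheme \<Rightarrow> ('c,'d,'y) tricat_scheme \<Rightarrow>
    ('a,'b,'c,'d) fnct \<Rightarrow> bool" where
  "triangle_functor C D F \<longleftrightarrow> additive_functor C D F \<and>
     (\<exists>\<phi>. (\<forall>X\<in>Obj C. iso D (\<phi> X) (fo F (shO C X)) (shO D (fo F X))) \<and>
          (\<forall>X\<in>Obj C. \<forall>Y\<in>Obj C. \<forall>f\<in>Hom C X Y.
             comp D (\<phi> Y) (fm F (shM C f)) = comp D (shM D (fm F f)) (\<phi> X)) \<and>
          (\<forall>X Y Z f g h. (X,Y,Z,f,g,h) \<in> dist C \<longrightarrow>
             (fo F X, fo F Y, fo F Z, fm F f, fm F g, comp D (\<phi> X) (fm F h)) \<in> dist D))"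

text \<open>adjunction C D F G : F : C -> D is left adjoint to G : D -> C
(unit/counit with the triangle identities).\<close>
definition adjunction :: "('a,'b,'x) precat_scheme \<Rightarrow> ('c,'d,'y) precat_scheme \<Rightarrow>
    ('a,'b,'c,'d) fnct \<Rightarrow> ('c,'d,'a,'b) fnct \<Rightarrow> bool" where
  "adjunction C D F G \<longleftrightarrow> is_functor C D F \<and> is_functor D C G \<and>
     (\<exists>\<eta> \<epsilon>.
        (\<forall>X\<in>Obj C. \<eta> X \<in> Hom C X (fo G (fo F X))) \<and>
        (\<forall>X\<in>Obj C. \<forall>Y\<in>Obj C. \<forall>f\<in>Hom C X Y.
            comp C (\<eta> Y) f = comp C (fm G (fm F f)) (\<eta> X)) \<and>
        (\<forall>Y\<in>Obj D. \<epsilon> Y \<in> Hom D (fo F (fo G Y)) Y) \<and>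
        (\<forall>X\<in>Obj D. \<forall>Y\<in>Obj D. \<forall>g\<in>Hom D X Y.
            comp D g (\<epsilon> X) = comp D (\<epsilon> Y) (fm F (fm G g))) \<and>
        (\<forall>X\<in>Obj C. comp D (\<epsilon> (fo F X)) (fm F (\<eta> X)) = idm D (fo F X)) \<and>
        (\<forall>Y\<in>Obj D. comp C (fm G (\<epsilon> Y)) (\<eta> (fo G Y)) = idm C (fo G Y)))"

text \<open>T-relative projective / injective: the transformations S(Q,-) -> T(TQ,T-)
resp. S(-,Q) -> T(T-,TQ) induced by T are injective (componentwise).\<close>
definition rel_projective :: "('a,'b,'x) precat_scheme \<Rightarrow> ('a,'b,'c,'d) fnct \<Rightarrow> 'a \<Rightarrow> bool" where
  "rel_projective C F Q \<longleftrightarrow> (\<forall>Y\<in>Obj C. inj_on (fm F) (Hom C Q Y))"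

definition rel_injective :: "('a,'b,'x) precat_scheme \<Rightarrow> ('a,'b,'c,'d) fnct \<Rightarrow> 'a \<Rightarrow> bool" where
  "rel_injective C F Q \<longleftrightarrow> (\<forall>Y\<in>Obj C. inj_on (fm F) (Hom C Y Q))"

definition direct_factor :: "('o,'m,'x) precat_scheme \<Rightarrow> 'o \<Rightarrow> 'o \<Rightarrow> bool" where
  "direct_factor C M X \<longleftrightarrow> (\<exists>N i p j q. biprod C X M N i p j q)"

fun hsum :: "('o,'m,'x) precat_scheme \<Rightarrow> 'o \<Rightarrow> 'o \<Rightarrow> (nat \<Rightarrow> 'm) \<Rightarrow> nat \<Rightarrow> 'm" where
  "hsum C a b f 0 = mzero C a b"
| "hsum C a b f (Suc n) = madd C (hsum C a b f n) (f n)"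

definition is_dsum :: "('o,'m,'x) precat_scheme \<Rightarrow> 'o \<Rightarrow> (nat \<Rightarrow> 'o) \<Rightarrow> nat \<Rightarrow>
    (nat \<Rightarrow> 'm) \<Rightarrow> (nat \<Rightarrow> 'm) \<Rightarrow> bool" where
  "is_dsum C X A n \<iota> \<pi> \<longleftrightarrow> X \<in> Obj C \<and>
     (\<forall>k<n. A k \<in> Obj C \<and> \<iota> k \<in> Hom C (A k) X \<and> \<pi> k \<in> Hom C X (A k)) \<and>
     (\<forall>k<n. \<forall>l<n. comp C (\<pi> k) (\<iota> l) =
                   (if k = l then idm C (A k) else mzero C (A l) (A k))) \<and>
     hsum C X X (\<lambda>k. comp C (\<iota> k) (\<pi> k)) n = idm C X"

definition in_add_im :: "('c,'d,'y) precat_scheme \<Rightarrow> ('a,'b,'x) precat_scheme \<Rightarrow>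
    ('c,'d,'a,'b) fnct \<Rightarrow> 'a \<Rightarrow> bool" where
  "in_add_im D C F M \<longleftrightarrow>
     (\<exists>n L X \<iota> \<pi>. (\<forall>k<n. L k \<in> Obj D) \<and>
        is_dsum C X (\<lambda>k. fo F (L k)) n \<iota> \<pi> \<and> direct_factor C M X)"

end

theory Submission imports Defs begin

section \<open>Basic algebra\<close>

lemma pa_cat: "preadditive C \<Longrightarrow> category C" by (simp add: preadditive_def)

lemma id_hom: "category C \<Longrightarrow> a \<in> Obj C \<Longrightarrow> idm C a \<in> Hom C a a"
  by (simp add: category_def)
lemma comp_hom: "category C \<Longrightarrow> a \<in> Obj C \<Longrightarrow> b \<in> Obj C \<Longrightarrow> c \<in> Obj C \<Longrightarrow>
   f \<in> Hom C a b \<Longrightarrow> g \<in> Hom C b c \<Longrightarrow> comp C g f \<in> Hom C a c"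
  unfolding category_def by blast
lemma id_l: "category C \<Longrightarrow> a \<in> Obj C \<Longrightarrow> b \<in> Obj C \<Longrightarrow> f \<in> Hom C a b \<Longrightarrow> comp C (idm C b) f = f"
  unfolding category_def by blast
lemma id_r: "category C \<Longrightarrow> a \<in> Obj C \<Longrightarrow> b \<in> Obj C \<Longrightarrow> f \<in> Hom C a b \<Longrightarrow> comp C f (idm C a) = f"
  unfolding category_def by blast
lemma cassoc: "category C \<Longrightarrow> a \<in> Obj C \<Longrightarrow> b \<in> Obj C \<Longrightarrow> c \<in> Obj C \<Longrightarrow> d \<in> Obj C \<Longrightarrow>
   f \<in> Hom C a b \<Longrightarrow> g \<in> Hom C b c \<Longrightarrow> h \<in> Hom C c d \<Longrightarrow>
   comp C h (comp C g f) = comp C (comp C h g) f"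
  unfolding category_def by blast

lemma zero_hom: "preadditive C \<Longrightarrow> a \<in> Obj C \<Longrightarrow> b \<in> Obj C \<Longrightarrow> mzero C a b \<in> Hom C a b"
  unfolding preadditive_def by blast
lemma add_hom: "preadditive C \<Longrightarrow> a \<in> Obj C \<Longrightarrow> b \<in> Obj C \<Longrightarrow> f \<in> Hom C a b \<Longrightarrow> g \<in> Hom C a b \<Longrightarrow> madd C f g \<in> Hom C a b"
  unfolding preadditive_def by blast
lemma neg_hom: "preadditive C \<Longrightarrow> a \<in> Obj C \<Longrightarrow> b \<in> Obj C \<Longrightarrow> f \<in> Hom C a b \<Longrightarrow> mneg C f \<in> Hom C a b"
  unfolding preadditive_def by blast
lemma add_assoc: "preadditive C \<Longrightarrow> a \<in> Obj C \<Longrightarrow> b \<in> Obj C \<Longrightarrow> f \<in> Hom C a b \<Longrightarrow> g \<in> Hom C a b \<Longrightarrow> h \<in> Hom C a b \<Longrightarrow>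
  madd C (madd C f g) h = madd C f (madd C g h)"
  unfolding preadditive_def by blast
lemma add_comm: "preadditive C \<Longrightarrow> a \<in> Obj C \<Longrightarrow> b \<in> Obj C \<Longrightarrow> f \<in> Hom C a b \<Longrightarrow> g \<in> Hom C a b \<Longrightarrow>
  madd C f g = madd C g f"
  unfolding preadditive_def by blast
lemma add_zero: "preadditive C \<Longrightarrow> a \<in> Obj C \<Longrightarrow> b \<in> Obj C \<Longrightarrow> f \<in> Hom C a b \<Longrightarrow> madd C f (mzero C a b) = f"
  unfolding preadditive_def by blast
lemma add_neg: "preadditive C \<Longrightarrow> a \<in> Obj C \<Longrightarrow> b \<in> Obj C \<Longrightarrow> f \<in> Hom C a b \<Longrightarrow> madd C f (mneg C f) = mzero C a b"
  unfolding preadditive_def by blast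
lemma comp_addl: "preadditive C \<Longrightarrow> a \<in> Obj C \<Longrightarrow> b \<in> Obj C \<Longrightarrow> c \<in> Obj C \<Longrightarrow> f \<in> Hom C a b \<Longrightarrow>
   g \<in> Hom C b c \<Longrightarrow> g' \<in> Hom C b c \<Longrightarrow> comp C (madd C g g') f = madd C (comp C g f) (comp C g' f)"
  unfolding preadditive_def by blast
lemma comp_addr: "preadditive C \<Longrightarrow> a \<in> Obj C \<Longrightarrow> b \<in> Obj C \<Longrightarrow> c \<in> Obj C \<Longrightarrow> f \<in> Hom C a b \<Longrightarrow> f' \<in> Hom C a b \<Longrightarrow>
   g \<in> Hom C b c \<Longrightarrow> comp C g (madd C f f') = madd C (comp C g f) (comp C g f')"
  unfolding preadditive_def by blast

lemma zero_add: "preadditive C \<Longrightarrow> a \<in> Obj C \<Longrightarrow> b \<in> Obj C \<Longrightarrow> f \<in> Hom C a b \<Longrightarrow> madd C (mzero C a b) f = f"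
proof -
  assume a: "preadditive C" "a \<in> Obj C" "b \<in> Obj C" "f \<in> Hom C a b"
  have "madd C (mzero C a b) f = madd C f (mzero C a b)" by (rule add_comm[OF a(1-3) zero_hom[OF a(1-3)] a(4)])
  then show ?thesis using add_zero[OF a] by simp
qed

lemma idem_zero: assumes "preadditive C" "a \<in> Obj C" "b \<in> Obj C" "x \<in> Hom C a b" "madd C x x = x"
  shows "x = mzero C a b"
proof -
  have "x = madd C x (madd C x (mneg C x))" using assms by (simp add: add_neg add_zero)
  also have "\<dots> = madd C (madd C x x) (mneg C x)" using add_assoc[OF assms(1-4) assms(4) neg_hom[OF assms(1-4)]] by simp
  also have "\<dots> = mzero C a b" using assms by (simp add: add_neg)
  finally show ?thesis .
qed

lemma neg_unique: assumes "preadditive C" "a \<in> Obj C" "b \<in> Obj C" "x \<in> Hom C a b" "y \<in> Hom C a b"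
  "madd C x y = mzero C a b" shows "y = mneg C x"
proof -
  have "y = madd C y (madd C x (mneg C x))" using assms by (simp add: add_neg add_zero)
  also have "\<dots> = madd C (madd C y x) (mneg C x)" using add_assoc[OF assms(1-3,5) assms(4) neg_hom[OF assms(1-4)]] by simp
  also have "\<dots> = madd C (madd C x y) (mneg C x)" using add_comm[OF assms(1-3,5,4)] by simp
  also have "\<dots> = mneg C x" using assms by (simp add: zero_add neg_hom)
  finally show ?thesis .
qed

lemma neg_neg: assumes "preadditive C" "a \<in> Obj C" "b \<in> Obj C" "x \<in> Hom C a b"
  shows "mneg C (mneg C x) = x"
proof -
  have n: "mneg C x \<in> Hom C a b" by (rule neg_hom[OF assms(1-4)])
  have "madd C (mneg C x) x = mzero C a b" using add_comm[OF assms(1-3) n assms(4)] add_neg[OF assms] by simp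
  from neg_unique[OF assms(1-3) n assms(4) this] show ?thesis by simp
qed

lemma neg_inj: assumes "preadditive C" "a \<in> Obj C" "b \<in> Obj C" "x \<in> Hom C a b" "y \<in> Hom C a b"
  "mneg C x = mneg C y" shows "x = y"
  using neg_neg[OF assms(1-4)] neg_neg[OF assms(1-3,5)] assms(6) by metis

lemma sub_eq: assumes "preadditive C" "a \<in> Obj C" "b \<in> Obj C" "x \<in> Hom C a b" "y \<in> Hom C a b"
  shows "madd C (madd C x (mneg C y)) y = x"
proof -
  have n: "mneg C y \<in> Hom C a b" by (rule neg_hom[OF assms(1-3,5)])
  have "madd C (madd C x (mneg C y)) y = madd C x (madd C (mneg C y) y)" using add_assoc[OF assms(1-4) n assms(5)] .
  also have "madd C (mneg C y) y = mzero C a b" using add_comm[OF assms(1-3) n assms(5)] add_neg[OF assms(1-3,5)] by simp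
  finally show ?thesis using add_zero[OF assms(1-4)] by simp
qed

lemma comp_zero_r: assumes "preadditive C" "a \<in> Obj C" "b \<in> Obj C" "c \<in> Obj C" "g \<in> Hom C b c"
  shows "comp C g (mzero C a b) = mzero C a c"
proof -
  have c: "category C" using assms(1) by (rule pa_cat)
  have "comp C g (mzero C a b) = comp C g (madd C (mzero C a b) (mzero C a b))"
    using assms by (simp add: add_zero zero_hom)
  also have "\<dots> = madd C (comp C g (mzero C a b)) (comp C g (mzero C a b))"
    using assms by (simp add: comp_addr zero_hom)
  finally have "madd C (comp C g (mzero C a b)) (comp C g (mzero C a b)) = comp C g (mzero C a b)" by (rule sym)
  from idem_zero[OF assms(1,2,4) comp_hom[OF c assms(2,3,4) zero_hom[OF assms(1,2,3)] assms(5)] this] show ?thesis .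
qed

lemma comp_zero_l: assumes "preadditive C" "a \<in> Obj C" "b \<in> Obj C" "c \<in> Obj C" "f \<in> Hom C a b"
  shows "comp C (mzero C b c) f = mzero C a c"
proof -
  have c: "category C" using assms(1) by (rule pa_cat)
  have "comp C (mzero C b c) f = comp C (madd C (mzero C b c) (mzero C b c)) f"
    using assms by (simp add: add_zero zero_hom)
  also have "\<dots> = madd C (comp C (mzero C b c) f) (comp C (mzero C b c) f)"
    using assms by (simp add: comp_addl zero_hom)
  finally have "madd C (comp C (mzero C b c) f) (comp C (mzero C b c) f) = comp C (mzero C b c) f" by (rule sym)
  from idem_zero[OF assms(1,2,4) comp_hom[OF c assms(2,3,4) assms(5) zero_hom[OF assms(1,3,4)]] this] show ?thesis .
qed

lemma comp_neg_l: assumes "preadditive C" "a \<in> Obj C" "b \<in> Obj C" "c \<in> Obj C" "f \<in> Hom C a b" "g \<in> Hom C b c"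
  shows "comp C (mneg C g) f = mneg C (comp C g f)"
proof -
  have c: "category C" using assms(1) by (rule pa_cat)
  have "madd C (comp C g f) (comp C (mneg C g) f) = comp C (madd C g (mneg C g)) f"
    using assms by (simp add: comp_addl neg_hom)
  also have "\<dots> = mzero C a c" using assms by (simp add: add_neg comp_zero_l)
  finally have "madd C (comp C g f) (comp C (mneg C g) f) = mzero C a c" .
  from neg_unique[OF assms(1,2,4) comp_hom[OF c assms(2-6)] comp_hom[OF c assms(2-5) neg_hom[OF assms(1,3,4,6)]] this]
  show ?thesis .
qed

lemma comp_neg_r: assumes "preadditive C" "a \<in> Obj C" "b \<in> Obj C" "c \<in> Obj C" "f \<in> Hom C a b" "g \<in> Hom C b c"
  shows "comp C g (mneg C f) = mneg C (comp C g f)"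
proof -
  have c: "category C" using assms(1) by (rule pa_cat)
  have "madd C (comp C g f) (comp C g (mneg C f)) = comp C g (madd C f (mneg C f))"
    using assms by (simp add: comp_addr neg_hom)
  also have "\<dots> = mzero C a c" using assms by (simp add: add_neg comp_zero_r)
  finally have "madd C (comp C g f) (comp C g (mneg C f)) = mzero C a c" .
  from neg_unique[OF assms(1,2,4) comp_hom[OF c assms(2-6)] comp_hom[OF c assms(2-4) neg_hom[OF assms(1-3,5)] assms(6)] this]
  show ?thesis .
qed


section \<open>Functors\<close>

lemma f_obj: "is_functor C D F \<Longrightarrow> a \<in> Obj C \<Longrightarrow> fo F a \<in> Obj D"
  unfolding is_functor_def by blast
lemma f_hom: "is_functor C D F \<Longrightarrow> a \<in> Obj C \<Longrightarrow> b \<in> Obj C \<Longrightarrow> f \<in> Hom C a b \<Longrightarrow> fm F f \<in> Hom D (fo F a) (fo F b)"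
  unfolding is_functor_def by blast
lemma f_id: "is_functor C D F \<Longrightarrow> a \<in> Obj C \<Longrightarrow> fm F (idm C a) = idm D (fo F a)"
  unfolding is_functor_def by blast
lemma f_comp: "is_functor C D F \<Longrightarrow> a \<in> Obj C \<Longrightarrow> b \<in> Obj C \<Longrightarrow> c \<in> Obj C \<Longrightarrow>
   f \<in> Hom C a b \<Longrightarrow> g \<in> Hom C b c \<Longrightarrow> fm F (comp C g f) = comp D (fm F g) (fm F f)"
  unfolding is_functor_def by blast
lemma af_f: "additive_functor C D F \<Longrightarrow> is_functor C D F"
  unfolding additive_functor_def by blast
lemma f_add: "additive_functor C D F \<Longrightarrow> a \<in> Obj C \<Longrightarrow> b \<in> Obj C \<Longrightarrow> f \<in> Hom C a b \<Longrightarrow> g \<in> Hom C a b \<Longrightarrow>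
   fm F (madd C f g) = madd D (fm F f) (fm F g)"
  unfolding additive_functor_def by blast

lemma f_zero: assumes "additive_functor C D F" "preadditive C" "preadditive D" "a \<in> Obj C" "b \<in> Obj C"
  shows "fm F (mzero C a b) = mzero D (fo F a) (fo F b)"
proof -
  have F: "is_functor C D F" using assms(1) by (rule af_f)
  have z: "mzero C a b \<in> Hom C a b" by (rule zero_hom[OF assms(2,4,5)])
  have "fm F (mzero C a b) = fm F (madd C (mzero C a b) (mzero C a b))" using add_zero[OF assms(2,4,5) z] by simp
  also have "\<dots> = madd D (fm F (mzero C a b)) (fm F (mzero C a b))" by (rule f_add[OF assms(1,4,5) z z])
  finally have "madd D (fm F (mzero C a b)) (fm F (mzero C a b)) = fm F (mzero C a b)" by (rule sym)
  from idem_zero[OF assms(3) f_obj[OF F assms(4)] f_obj[OF F assms(5)] f_hom[OF F assms(4,5) z] this]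
  show ?thesis .
qed

lemma f_neg: assumes "additive_functor C D F" "preadditive C" "preadditive D" "a \<in> Obj C" "b \<in> Obj C" "f \<in> Hom C a b"
  shows "fm F (mneg C f) = mneg D (fm F f)"
proof -
  have F: "is_functor C D F" using assms(1) by (rule af_f)
  have n: "mneg C f \<in> Hom C a b" by (rule neg_hom[OF assms(2,4,5,6)])
  have "madd D (fm F f) (fm F (mneg C f)) = fm F (madd C f (mneg C f))" by (rule f_add[OF assms(1,4,5,6) n, symmetric])
  also have "\<dots> = mzero D (fo F a) (fo F b)" using add_neg[OF assms(2,4,5,6)] f_zero[OF assms(1-5)] by simp
  finally show ?thesis
    by (rule neg_unique[OF assms(3) f_obj[OF F assms(4)] f_obj[OF F assms(5)] f_hom[OF F assms(4,5,6)] f_hom[OF F assms(4,5) n]])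
qed

lemma neg_zero: assumes "preadditive C" "a \<in> Obj C" "b \<in> Obj C"
  shows "mneg C (mzero C a b) = mzero C a b"
  using neg_unique[OF assms zero_hom[OF assms] zero_hom[OF assms]] add_zero[OF assms zero_hom[OF assms]] by simp

lemma tri_pa: "triangulated C \<Longrightarrow> preadditive C"
  unfolding triangulated_def additive_def by blast
lemma tri_cat: "triangulated C \<Longrightarrow> category C"
  using tri_pa pa_cat by blast
lemma tri_zobj: "triangulated C \<Longrightarrow> \<exists>z\<in>Obj C. idm C z = mzero C z z"
  unfolding triangulated_def additive_def by blast
lemma tri_shaf: "triangulated C \<Longrightarrow> additive_functor C C (shiftF C)"
  unfolding triangulated_def by blast
lemma tri_shf: "triangulated C \<Longrightarrow> is_functor C C (shiftF C)"
  using tri_shaf af_f by blast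
lemma sh_obj: "triangulated C \<Longrightarrow> a \<in> Obj C \<Longrightarrow> shO C a \<in> Obj C"
  using f_obj[OF tri_shf] by (simp add: shiftF_def)
lemma sh_hom: "triangulated C \<Longrightarrow> a \<in> Obj C \<Longrightarrow> b \<in> Obj C \<Longrightarrow> f \<in> Hom C a b \<Longrightarrow> shM C f \<in> Hom C (shO C a) (shO C b)"
  using f_hom[OF tri_shf] by (simp add: shiftF_def)
lemma sh_id: "triangulated C \<Longrightarrow> a \<in> Obj C \<Longrightarrow> shM C (idm C a) = idm C (shO C a)"
  using f_id[OF tri_shf] by (simp add: shiftF_def)
lemma sh_comp: "triangulated C \<Longrightarrow> a \<in> Obj C \<Longrightarrow> b \<in> Obj C \<Longrightarrow> c \<in> Obj C \<Longrightarrow>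
   f \<in> Hom C a b \<Longrightarrow> g \<in> Hom C b c \<Longrightarrow> shM C (comp C g f) = comp C (shM C g) (shM C f)"
  using f_comp[OF tri_shf] by (simp add: shiftF_def)
lemma sh_zero: "triangulated C \<Longrightarrow> a \<in> Obj C \<Longrightarrow> b \<in> Obj C \<Longrightarrow> shM C (mzero C a b) = mzero C (shO C a) (shO C b)"
  using f_zero[OF tri_shaf tri_pa tri_pa] by (simp add: shiftF_def)
lemma sh_neg: "triangulated C \<Longrightarrow> a \<in> Obj C \<Longrightarrow> b \<in> Obj C \<Longrightarrow> f \<in> Hom C a b \<Longrightarrow> shM C (mneg C f) = mneg C (shM C f)"
  using f_neg[OF tri_shaf tri_pa tri_pa] by (simp add: shiftF_def)
lemma sh_bij_all: "triangulated C \<Longrightarrow> (\<forall>a\<in>Obj C. \<forall>b\<in>Obj C. bij_betw (shM C) (Hom C a b) (Hom C (shO C a) (shO C b)))"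
  unfolding triangulated_def by (elim conjE, assumption)
lemma sh_bij: "triangulated C \<Longrightarrow> a \<in> Obj C \<Longrightarrow> b \<in> Obj C \<Longrightarrow> bij_betw (shM C) (Hom C a b) (Hom C (shO C a) (shO C b))"
  using sh_bij_all by blast
lemma sh_inj: "triangulated C \<Longrightarrow> a \<in> Obj C \<Longrightarrow> b \<in> Obj C \<Longrightarrow> f \<in> Hom C a b \<Longrightarrow> g \<in> Hom C a b \<Longrightarrow>
   shM C f = shM C g \<Longrightarrow> f = g"
  using sh_bij by (metis bij_betw_def inj_onD)
lemma sh_surj: "triangulated C \<Longrightarrow> a \<in> Obj C \<Longrightarrow> b \<in> Obj C \<Longrightarrow> w \<in> Hom C (shO C a) (shO C b) \<Longrightarrow>
   \<exists>t\<in>Hom C a b. w = shM C t"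
  using sh_bij by (metis bij_betw_def imageE)
lemma tri_ess_all: "triangulated C \<Longrightarrow> (\<forall>b\<in>Obj C. \<exists>a\<in>Obj C. \<exists>f. iso C f (shO C a) b)"
  unfolding triangulated_def by (elim conjE, assumption)
lemma tri_ess: "triangulated C \<Longrightarrow> b \<in> Obj C \<Longrightarrow> \<exists>a\<in>Obj C. \<exists>f. iso C f (shO C a) b"
  using tri_ess_all by blast
lemma dist_tri_all: "triangulated C \<Longrightarrow> (\<forall>t\<in>dist C. is_triangle C t)"
  unfolding triangulated_def by (elim conjE, assumption)
lemma dist_tri: "triangulated C \<Longrightarrow> (X,Y,Z,f,g,h) \<in> dist C \<Longrightarrow>
   X \<in> Obj C \<and> Y \<in> Obj C \<and> Z \<in> Obj C \<and> f \<in> Hom C X Y \<and> g \<in> Hom C Y Z \<and> h \<in> Hom C Z (shO C X)"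
  using dist_tri_all[of C] unfolding is_triangle_def by fastforce
lemma tri_isocl_all: "triangulated C \<Longrightarrow> (\<forall>X Y Z f g h X' Y' Z' f' g' h' u v w.
        (X,Y,Z,f,g,h) \<in> dist C \<longrightarrow> is_triangle C (X',Y',Z',f',g',h') \<longrightarrow>
        iso C u X X' \<longrightarrow> iso C v Y Y' \<longrightarrow> iso C w Z Z' \<longrightarrow>
        comp C v f = comp C f' u \<longrightarrow> comp C w g = comp C g' v \<longrightarrow>
        comp C (shM C u) h = comp C h' w \<longrightarrow>
        (X',Y',Z',f',g',h') \<in> dist C)"
  unfolding triangulated_def by (elim conjE, assumption)
lemma tri_isocl: "triangulated C \<Longrightarrow> (X,Y,Z,f,g,h) \<in> dist C \<Longrightarrow> is_triangle C (X',Y',Z',f',g',h') \<Longrightarrow>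
        iso C u X X' \<Longrightarrow> iso C v Y Y' \<Longrightarrow> iso C w Z Z' \<Longrightarrow>
        comp C v f = comp C f' u \<Longrightarrow> comp C w g = comp C g' v \<Longrightarrow>
        comp C (shM C u) h = comp C h' w \<Longrightarrow>
        (X',Y',Z',f',g',h') \<in> dist C"
  using tri_isocl_all[of C] by blast
lemma tr1a_all: "triangulated C \<Longrightarrow> (\<forall>X\<in>Obj C. \<forall>z\<in>Obj C. idm C z = mzero C z z \<longrightarrow>
        (X, X, z, idm C X, mzero C X z, mzero C z (shO C X)) \<in> dist C)"
  unfolding triangulated_def by (elim conjE, assumption)
lemma tr1a: "triangulated C \<Longrightarrow> X \<in> Obj C \<Longrightarrow> z \<in> Obj C \<Longrightarrow> idm C z = mzero C z z \<Longrightarrow>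
        (X, X, z, idm C X, mzero C X z, mzero C z (shO C X)) \<in> dist C"
  using tr1a_all by blast
lemma tr1b_all: "triangulated C \<Longrightarrow> (\<forall>X\<in>Obj C. \<forall>Y\<in>Obj C. \<forall>f\<in>Hom C X Y. \<exists>Z g h. (X,Y,Z,f,g,h) \<in> dist C)"
  unfolding triangulated_def by (elim conjE, assumption)
lemma tr1b: "triangulated C \<Longrightarrow> X \<in> Obj C \<Longrightarrow> Y \<in> Obj C \<Longrightarrow> f \<in> Hom C X Y \<Longrightarrow> \<exists>Z g h. (X,Y,Z,f,g,h) \<in> dist C"
  using tr1b_all by blast
lemma tr2_all: "triangulated C \<Longrightarrow> (\<forall>X Y Z f g h. is_triangle C (X,Y,Z,f,g,h) \<longrightarrow>
        ((X,Y,Z,f,g,h) \<in> dist C \<longleftrightarrow> (Y, Z, shO C X, g, h, mneg C (shM C f)) \<in> dist C))"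
  unfolding triangulated_def by (elim conjE, assumption)
lemma tr2: "triangulated C \<Longrightarrow> is_triangle C (X,Y,Z,f,g,h) \<Longrightarrow>
        ((X,Y,Z,f,g,h) \<in> dist C \<longleftrightarrow> (Y, Z, shO C X, g, h, mneg C (shM C f)) \<in> dist C)"
  using tr2_all by blast
lemma tr3_all: "triangulated C \<Longrightarrow> (\<forall>X Y Z f g h X' Y' Z' f' g' h' u v.
        (X,Y,Z,f,g,h) \<in> dist C \<longrightarrow> (X',Y',Z',f',g',h') \<in> dist C \<longrightarrow>
        u \<in> Hom C X X' \<longrightarrow> v \<in> Hom C Y Y' \<longrightarrow> comp C v f = comp C f' u \<longrightarrow>
        (\<exists>w\<in>Hom C Z Z'. comp C w g = comp C g' v \<and> comp C (shM C u) h = comp C h' w))"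
  unfolding triangulated_def by (elim conjE, assumption)
lemma tr3: "triangulated C \<Longrightarrow> (X,Y,Z,f,g,h) \<in> dist C \<Longrightarrow> (X',Y',Z',f',g',h') \<in> dist C \<Longrightarrow>
        u \<in> Hom C X X' \<Longrightarrow> v \<in> Hom C Y Y' \<Longrightarrow> comp C v f = comp C f' u \<Longrightarrow>
        (\<exists>w\<in>Hom C Z Z'. comp C w g = comp C g' v \<and> comp C (shM C u) h = comp C h' w)"
  using tr3_all[of C] by blast


section \<open>Triangle lemmas\<close>

lemma dist_comp_zero: assumes tri: "triangulated C" and d: "(X,Y,Z,f,g,h) \<in> dist C"
  shows "comp C g f = mzero C X Z"
proof -
  have c: "category C" by (rule tri_cat[OF tri])
  have pa: "preadditive C" by (rule tri_pa[OF tri])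
  from dist_tri[OF tri d] have o: "X \<in> Obj C" "Y \<in> Obj C" "Z \<in> Obj C" "f \<in> Hom C X Y" "g \<in> Hom C Y Z" by auto
  obtain z where z: "z \<in> Obj C" "idm C z = mzero C z z" using tri_zobj[OF tri] by blast
  have d0: "(X, X, z, idm C X, mzero C X z, mzero C z (shO C X)) \<in> dist C" by (rule tr1a[OF tri o(1) z])
  obtain w where w: "w \<in> Hom C z Z" "comp C w (mzero C X z) = comp C g f"
    using tr3[OF tri d0 d id_hom[OF c o(1)] o(4) refl] by blast
  have "comp C w (mzero C X z) = mzero C X Z" by (rule comp_zero_r[OF pa o(1) z(1) o(3) w(1)])
  then show ?thesis using w(2) by simp
qed

lemma dist_rot: assumes tri: "triangulated C" and d: "(X,Y,Z,f,g,h) \<in> dist C"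
  shows "(Y, Z, shO C X, g, h, mneg C (shM C f)) \<in> dist C"
proof -
  have "is_triangle C (X,Y,Z,f,g,h)" using dist_tri[OF tri d] by (simp add: is_triangle_def)
  then show ?thesis using tr2[OF tri] d by blast
qed

lemma weak_ker: assumes tri: "triangulated C" and d: "(X,Y,Z,f,g,h) \<in> dist C"
  and W: "W \<in> Obj C" and u: "u \<in> Hom C W Y" and gu: "comp C g u = mzero C W Z"
  shows "\<exists>t\<in>Hom C W X. comp C f t = u"
proof -
  have c: "category C" by (rule tri_cat[OF tri])
  have pa: "preadditive C" by (rule tri_pa[OF tri])
  from dist_tri[OF tri d] have o: "X \<in> Obj C" "Y \<in> Obj C" "Z \<in> Obj C" "f \<in> Hom C X Y" "g \<in> Hom C Y Z" by auto
  obtain z where z: "z \<in> Obj C" "idm C z = mzero C z z" using tri_zobj[OF tri] by blast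
  have d0: "(W, W, z, idm C W, mzero C W z, mzero C z (shO C W)) \<in> dist C" by (rule tr1a[OF tri W z])
  have d0r: "(W, z, shO C W, mzero C W z, mzero C z (shO C W), mneg C (shM C (idm C W))) \<in> dist C"
    by (rule dist_rot[OF tri d0])
  have dr: "(Y, Z, shO C X, g, h, mneg C (shM C f)) \<in> dist C" by (rule dist_rot[OF tri d])
  have v: "mzero C z Z \<in> Hom C z Z" by (rule zero_hom[OF pa z(1) o(3)])
  have eq: "comp C (mzero C z Z) (mzero C W z) = comp C g u"
    using comp_zero_l[OF pa W z(1) o(3) zero_hom[OF pa W z(1)]] gu by simp
  obtain w where w: "w \<in> Hom C (shO C W) (shO C X)"
    "comp C (shM C u) (mneg C (shM C (idm C W))) = comp C (mneg C (shM C f)) w"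
    using tr3[OF tri d0r dr u v eq] by blast
  have sW: "shO C W \<in> Obj C" by (rule sh_obj[OF tri W])
  have sX: "shO C X \<in> Obj C" by (rule sh_obj[OF tri o(1)])
  have sY: "shO C Y \<in> Obj C" by (rule sh_obj[OF tri o(2)])
  obtain t where t: "t \<in> Hom C W X" "w = shM C t" using sh_surj[OF tri W o(1) w(1)] by blast
  have su: "shM C u \<in> Hom C (shO C W) (shO C Y)" by (rule sh_hom[OF tri W o(2) u])
  have sf: "shM C f \<in> Hom C (shO C X) (shO C Y)" by (rule sh_hom[OF tri o(1,2,4)])
  have ft: "comp C f t \<in> Hom C W Y" by (rule comp_hom[OF c W o(1,2) t(1) o(4)])
  have "comp C (shM C u) (mneg C (shM C (idm C W))) = mneg C (shM C u)"
    using sh_id[OF tri W] comp_neg_r[OF pa sW sW sY id_hom[OF c sW] su] id_r[OF c sW sY su] by simp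
  moreover have "comp C (mneg C (shM C f)) w = mneg C (shM C (comp C f t))"
    using t(2) comp_neg_l[OF pa sW sX sY sh_hom[OF tri W o(1) t(1)] sf] sh_comp[OF tri W o(1,2) t(1) o(4)] by simp
  ultimately have "mneg C (shM C u) = mneg C (shM C (comp C f t))" using w(2) by simp
  then have "shM C u = shM C (comp C f t)"
    by (rule neg_inj[OF pa sW sY su sh_hom[OF tri W o(2) ft]])
  then have "u = comp C f t" by (rule sh_inj[OF tri W o(2) u ft])
  then show ?thesis using t(1) by blast
qed

lemma weak_coker: assumes tri: "triangulated C" and d: "(X,Y,Z,f,g,h) \<in> dist C"
  and W: "W \<in> Obj C" and u: "u \<in> Hom C Y W" and uf: "comp C u f = mzero C X W"
  shows "\<exists>t\<in>Hom C Z W. comp C t g = u"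
proof -
  have c: "category C" by (rule tri_cat[OF tri])
  have pa: "preadditive C" by (rule tri_pa[OF tri])
  from dist_tri[OF tri d] have o: "X \<in> Obj C" "Y \<in> Obj C" "Z \<in> Obj C" "f \<in> Hom C X Y" "g \<in> Hom C Y Z" by auto
  obtain z where z: "z \<in> Obj C" "idm C z = mzero C z z" using tri_zobj[OF tri] by blast
  have sz: "shO C z \<in> Obj C" by (rule sh_obj[OF tri z(1)])
  have sW: "shO C W \<in> Obj C" by (rule sh_obj[OF tri W])
  have zz: "idm C (shO C z) = mzero C (shO C z) (shO C z)"
    using sh_id[OF tri z(1)] sh_zero[OF tri z(1) z(1)] z(2) by simp
  have d1: "(W, W, shO C z, idm C W, mzero C W (shO C z), mzero C (shO C z) (shO C W)) \<in> dist C"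
    by (rule tr1a[OF tri W sz zz])
  have e: "mneg C (shM C (mzero C z W)) = mzero C (shO C z) (shO C W)"
    using sh_zero[OF tri z(1) W] neg_zero[OF pa sz sW] by simp
  have it: "is_triangle C (z, W, W, mzero C z W, idm C W, mzero C W (shO C z))"
    unfolding is_triangle_def using z(1) W zero_hom[OF pa z(1) W] id_hom[OF c W] zero_hom[OF pa W sz] by simp
  have d2: "(z, W, W, mzero C z W, idm C W, mzero C W (shO C z)) \<in> dist C"
    using tr2[OF tri it] d1 e by simp
  have eq: "comp C u f = comp C (mzero C z W) (mzero C X z)"
    using uf comp_zero_l[OF pa o(1) z(1) W zero_hom[OF pa o(1) z(1)]] by simp
  obtain w where w: "w \<in> Hom C Z W" "comp C w g = comp C (idm C W) u"
    using tr3[OF tri d d2 zero_hom[OF pa o(1) z(1)] u eq] by blast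
  then show ?thesis using id_l[OF c o(2) W u] by auto
qed


lemma split_df: assumes tri: "triangulated C" and M: "M \<in> Obj C" and X: "X \<in> Obj C"
  and s: "s \<in> Hom C M X" and p: "p \<in> Hom C X M" and ps: "comp C p s = idm C M"
  shows "direct_factor C M X"
proof -
  have c: "category C" by (rule tri_cat[OF tri])
  have pa: "preadditive C" by (rule tri_pa[OF tri])
  obtain N g h where d: "(M,X,N,s,g,h) \<in> dist C" using tr1b[OF tri M X s] by blast
  from dist_tri[OF tri d] have N: "N \<in> Obj C" and g: "g \<in> Hom C X N" and h: "h \<in> Hom C N (shO C M)" by auto
  have sM: "shO C M \<in> Obj C" by (rule sh_obj[OF tri M])
  have sX: "shO C X \<in> Obj C" by (rule sh_obj[OF tri X])
  have ss: "shM C s \<in> Hom C (shO C M) (shO C X)" by (rule sh_hom[OF tri M X s])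
  have sp: "shM C p \<in> Hom C (shO C X) (shO C M)" by (rule sh_hom[OF tri X M p])
  have dr: "(X, N, shO C M, g, h, mneg C (shM C s)) \<in> dist C" by (rule dist_rot[OF tri d])
  have "comp C (mneg C (shM C s)) h = mzero C N (shO C X)" by (rule dist_comp_zero[OF tri dist_rot[OF tri dr]])
  then have "mneg C (comp C (shM C s) h) = mzero C N (shO C X)"
    using comp_neg_l[OF pa N sM sX h ss] by simp
  then have "mneg C (mneg C (comp C (shM C s) h)) = mzero C N (shO C X)"
    using neg_zero[OF pa N sX] by simp
  then have sh0: "comp C (shM C s) h = mzero C N (shO C X)"
    using neg_neg[OF pa N sX comp_hom[OF c N sM sX h ss]] by simp
  have "h = comp C (idm C (shO C M)) h" using id_l[OF c N sM h] by simp
  also have "\<dots> = comp C (shM C (comp C p s)) h" using ps sh_id[OF tri M] by simp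
  also have "\<dots> = comp C (comp C (shM C p) (shM C s)) h" using sh_comp[OF tri M X M s p] by simp
  also have "\<dots> = comp C (shM C p) (comp C (shM C s) h)" using cassoc[OF c N sM sX sM h ss sp] by simp
  also have "\<dots> = mzero C N (shO C M)" using sh0 comp_zero_r[OF pa N sX sM sp] by simp
  finally have h0: "h = mzero C N (shO C M)" .
  have "comp C h (idm C N) = mzero C N (shO C M)" using id_r[OF c N sM h] h0 by simp
  then obtain j where j: "j \<in> Hom C N X" "comp C g j = idm C N"
    using weak_ker[OF tri dr N id_hom[OF c N]] id_r[OF c N N] by blast
  have jg: "comp C j g \<in> Hom C X X" by (rule comp_hom[OF c X N X g j(1)])
  define e where "e = madd C (idm C X) (mneg C (comp C j g))"
  have e: "e \<in> Hom C X X" unfolding e_def by (rule add_hom[OF pa X X id_hom[OF c X] neg_hom[OF pa X X jg]])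
  have "comp C g e = madd C (comp C g (idm C X)) (comp C g (mneg C (comp C j g)))"
    unfolding e_def by (rule comp_addr[OF pa X X N id_hom[OF c X] neg_hom[OF pa X X jg] g])
  also have "\<dots> = madd C g (mneg C (comp C g (comp C j g)))"
    using id_r[OF c X N g] comp_neg_r[OF pa X X N jg g] by simp
  also have "comp C g (comp C j g) = comp C (comp C g j) g" by (rule cassoc[OF c X N X N g j(1) g])
  also have "\<dots> = g" using j(2) id_l[OF c X N g] by simp
  also have "madd C g (mneg C g) = mzero C X N" by (rule add_neg[OF pa X N g])
  finally have ge: "comp C g e = mzero C X N" .
  obtain p' where p': "p' \<in> Hom C X M" "comp C s p' = e" using weak_ker[OF tri d X e ge] by blast
  have gs: "comp C g s = mzero C M N" by (rule dist_comp_zero[OF tri d])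
  have "comp C e s = madd C (comp C (idm C X) s) (comp C (mneg C (comp C j g)) s)"
    unfolding e_def by (rule comp_addl[OF pa M X X s id_hom[OF c X] neg_hom[OF pa X X jg]])
  also have "\<dots> = madd C s (mneg C (comp C (comp C j g) s))"
    using id_l[OF c M X s] comp_neg_l[OF pa M X X s jg] by simp
  also have "comp C (comp C j g) s = comp C j (comp C g s)" by (rule cassoc[OF c M X N X s g j(1), symmetric])
  also have "\<dots> = mzero C M X" using gs comp_zero_r[OF pa M N X j(1)] by simp
  also have "madd C s (mneg C (mzero C M X)) = s" using neg_zero[OF pa M X] add_zero[OF pa M X s] by simp
  finally have es: "comp C e s = s" .
  have "comp C p' s = comp C (comp C p s) (comp C p' s)" using id_l[OF c M M comp_hom[OF c M X M s p'(1)]] ps by simp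
  also have "\<dots> = comp C p (comp C s (comp C p' s))"
    by (rule cassoc[OF c M M X M comp_hom[OF c M X M s p'(1)] s p, symmetric])
  also have "comp C s (comp C p' s) = comp C (comp C s p') s" by (rule cassoc[OF c M X M X s p'(1) s])
  also have "\<dots> = s" using p'(2) es by simp
  finally have p's: "comp C p' s = idm C M" using ps by simp
  have "comp C e j = madd C (comp C (idm C X) j) (comp C (mneg C (comp C j g)) j)"
    unfolding e_def by (rule comp_addl[OF pa N X X j(1) id_hom[OF c X] neg_hom[OF pa X X jg]])
  also have "\<dots> = madd C j (mneg C (comp C (comp C j g) j))"
    using id_l[OF c N X j(1)] comp_neg_l[OF pa N X X j(1) jg] by simp
  also have "comp C (comp C j g) j = comp C j (comp C g j)" by (rule cassoc[OF c N X N X j(1) g j(1), symmetric])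
  also have "\<dots> = j" using j(2) id_r[OF c N X j(1)] by simp
  also have "madd C j (mneg C j) = mzero C N X" by (rule add_neg[OF pa N X j(1)])
  finally have ej: "comp C e j = mzero C N X" .
  have "comp C p' j = comp C (comp C p s) (comp C p' j)" using id_l[OF c N M comp_hom[OF c N X M j(1) p'(1)]] ps by simp
  also have "\<dots> = comp C p (comp C s (comp C p' j))"
    by (rule cassoc[OF c N M X M comp_hom[OF c N X M j(1) p'(1)] s p, symmetric])
  also have "comp C s (comp C p' j) = comp C (comp C s p') j" by (rule cassoc[OF c N X M X j(1) p'(1) s])
  also have "\<dots> = mzero C N X" using p'(2) ej by simp
  also have "comp C p (mzero C N X) = mzero C N M" by (rule comp_zero_r[OF pa N X M p])
  finally have p'j: "comp C p' j = mzero C N M" .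
  have sum: "madd C (comp C s p') (comp C j g) = idm C X"
    using p'(2) sub_eq[OF pa X X id_hom[OF c X] jg] unfolding e_def by simp
  have "biprod C X M N s p' j g"
    unfolding biprod_def using X M N s p'(1) j g p's p'j gs sum by simp
  then show ?thesis unfolding direct_factor_def by blast
qed

lemma tri_pre: assumes tri: "triangulated C" and X: "X \<in> Obj C" and Y: "Y \<in> Obj C" and f: "f \<in> Hom C X Y"
  shows "\<exists>W k h. (W,X,Y,k,f,h) \<in> dist C"
proof -
  have c: "category C" by (rule tri_cat[OF tri])
  have pa: "preadditive C" by (rule tri_pa[OF tri])
  obtain Z g0 h0 where d: "(X,Y,Z,f,g0,h0) \<in> dist C" using tr1b[OF tri X Y f] by blast
  from dist_tri[OF tri d] have Z: "Z \<in> Obj C" and g0: "g0 \<in> Hom C Y Z" and h0: "h0 \<in> Hom C Z (shO C X)" by auto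
  obtain a \<phi> where a: "a \<in> Obj C" and iso: "iso C \<phi> (shO C a) Z" using tri_ess[OF tri Z] by blast
  obtain \<psi> where \<phi>: "\<phi> \<in> Hom C (shO C a) Z" and \<psi>: "\<psi> \<in> Hom C Z (shO C a)"
    and \<psi>\<phi>: "comp C \<psi> \<phi> = idm C (shO C a)" and \<phi>\<psi>: "comp C \<phi> \<psi> = idm C Z"
    using iso unfolding iso_def by blast
  have sa: "shO C a \<in> Obj C" by (rule sh_obj[OF tri a])
  have sX: "shO C X \<in> Obj C" by (rule sh_obj[OF tri X])
  have hp: "comp C h0 \<phi> \<in> Hom C (shO C a) (shO C X)" by (rule comp_hom[OF c sa Z sX \<phi> h0])
  obtain k where k: "k \<in> Hom C a X" "mneg C (comp C h0 \<phi>) = shM C k"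
    using sh_surj[OF tri a X neg_hom[OF pa sa sX hp]] by blast
  have mk: "mneg C (shM C k) = comp C h0 \<phi>" using k(2)[symmetric] neg_neg[OF pa sa sX hp] by simp
  have pg: "comp C \<psi> g0 \<in> Hom C Y (shO C a)" by (rule comp_hom[OF c Y Z sa g0 \<psi>])
  have it: "is_triangle C (X,Y,shO C a,f,comp C \<psi> g0, comp C h0 \<phi>)"
    unfolding is_triangle_def using X Y sa f pg hp by simp
  have isoX: "iso C (idm C X) X X" unfolding iso_def using id_hom[OF c X] id_l[OF c X X id_hom[OF c X]] by blast
  have isoY: "iso C (idm C Y) Y Y" unfolding iso_def using id_hom[OF c Y] id_l[OF c Y Y id_hom[OF c Y]] by blast
  have isoZ: "iso C \<psi> Z (shO C a)" unfolding iso_def using \<psi> \<phi> \<psi>\<phi> \<phi>\<psi> by blast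
  have e1: "comp C (idm C Y) f = comp C f (idm C X)" using id_l[OF c X Y f] id_r[OF c X Y f] by simp
  have e2: "comp C \<psi> g0 = comp C (comp C \<psi> g0) (idm C Y)" using id_r[OF c Y sa pg] by simp
  have "comp C (comp C h0 \<phi>) \<psi> = comp C h0 (comp C \<phi> \<psi>)" by (rule cassoc[OF c Z sa Z sX \<psi> \<phi> h0, symmetric])
  then have e3: "comp C (shM C (idm C X)) h0 = comp C (comp C h0 \<phi>) \<psi>"
    using \<phi>\<psi> sh_id[OF tri X] id_l[OF c Z sX h0] id_r[OF c Z sX h0] by simp
  have d': "(X,Y,shO C a,f,comp C \<psi> g0, comp C h0 \<phi>) \<in> dist C"
    by (rule tri_isocl[OF tri d it isoX isoY isoZ e1 e2 e3])
  have it2: "is_triangle C (a,X,Y,k,f,comp C \<psi> g0)"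
    unfolding is_triangle_def using a X Y k(1) f pg by simp
  have "(a,X,Y,k,f,comp C \<psi> g0) \<in> dist C" using tr2[OF tri it2] d' mk by simp
  then show ?thesis by blast
qed


section \<open>Finite sums\<close>

lemma hsum_hom: assumes pa: "preadditive C" and a: "a \<in> Obj C" and b: "b \<in> Obj C"
  shows "(\<forall>k<n. \<phi> k \<in> Hom C a b) \<Longrightarrow> hsum C a b \<phi> n \<in> Hom C a b"
proof (induction n)
  case 0 then show ?case using zero_hom[OF pa a b] by simp
next
  case (Suc n) then show ?case using add_hom[OF pa a b] by simp
qed

lemma hsum_cong: "(\<forall>k<n. \<phi> k = \<psi> k) \<Longrightarrow> hsum C a b \<phi> n = hsum C a b \<psi> n"
  by (induction n) auto

lemma hsum_compl: assumes pa: "preadditive C" and a: "a \<in> Obj C" and b: "b \<in> Obj C" and c: "c \<in> Obj C"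
  and g: "g \<in> Hom C b c"
  shows "(\<forall>k<n. \<phi> k \<in> Hom C a b) \<Longrightarrow> comp C g (hsum C a b \<phi> n) = hsum C a c (\<lambda>k. comp C g (\<phi> k)) n"
proof (induction n)
  case 0 then show ?case using comp_zero_r[OF pa a b c g] by simp
next
  case (Suc n)
  then have h: "hsum C a b \<phi> n \<in> Hom C a b" "\<phi> n \<in> Hom C a b" using hsum_hom[OF pa a b] by auto
  show ?case using comp_addr[OF pa a b c h g] Suc by simp
qed

lemma hsum_compr: assumes pa: "preadditive C" and a: "a \<in> Obj C" and b: "b \<in> Obj C" and c: "c \<in> Obj C"
  and f: "f \<in> Hom C a b"
  shows "(\<forall>k<n. \<phi> k \<in> Hom C b c) \<Longrightarrow> comp C (hsum C b c \<phi> n) f = hsum C a c (\<lambda>k. comp C (\<phi> k) f) n"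
proof (induction n)
  case 0 then show ?case using comp_zero_l[OF pa a b c f] by simp
next
  case (Suc n)
  then have h: "hsum C b c \<phi> n \<in> Hom C b c" "\<phi> n \<in> Hom C b c" using hsum_hom[OF pa b c] by auto
  show ?case using comp_addl[OF pa a b c f h] Suc by simp
qed

lemma dsum_ext_l: assumes pa: "preadditive C" and ds: "is_dsum C X A n \<iota> \<pi>" and Y: "Y \<in> Obj C"
  and g: "g \<in> Hom C X Y" and g': "g' \<in> Hom C X Y" and eq: "\<forall>k<n. comp C g (\<iota> k) = comp C g' (\<iota> k)"
  shows "g = g'"
proof -
  have c: "category C" by (rule pa_cat[OF pa])
  have X: "X \<in> Obj C" and m: "\<forall>k<n. A k \<in> Obj C \<and> \<iota> k \<in> Hom C (A k) X \<and> \<pi> k \<in> Hom C X (A k)"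
    and sm: "hsum C X X (\<lambda>k. comp C (\<iota> k) (\<pi> k)) n = idm C X"
    using ds unfolding is_dsum_def by auto
  have ip: "\<forall>k<n. comp C (\<iota> k) (\<pi> k) \<in> Hom C X X" using m comp_hom[OF c X _ X] by blast
  have key: "h = hsum C X Y (\<lambda>k. comp C (comp C h (\<iota> k)) (\<pi> k)) n" if h: "h \<in> Hom C X Y" for h
  proof -
    have "h = comp C h (idm C X)" using id_r[OF c X Y h] by simp
    also have "\<dots> = hsum C X Y (\<lambda>k. comp C h (comp C (\<iota> k) (\<pi> k))) n"
      using sm hsum_compl[OF pa X X Y h ip] by simp
    also have "\<dots> = hsum C X Y (\<lambda>k. comp C (comp C h (\<iota> k)) (\<pi> k)) n"
      by (rule hsum_cong) (use m cassoc[OF c X _ X Y] h in blast)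
    finally show ?thesis .
  qed
  have "g = hsum C X Y (\<lambda>k. comp C (comp C g (\<iota> k)) (\<pi> k)) n" by (rule key[OF g])
  also have "\<dots> = hsum C X Y (\<lambda>k. comp C (comp C g' (\<iota> k)) (\<pi> k)) n"
    by (rule hsum_cong) (use eq in simp)
  also have "\<dots> = g'" by (rule key[OF g', symmetric])
  finally show ?thesis .
qed

lemma dsum_ext_r: assumes pa: "preadditive C" and ds: "is_dsum C X A n \<iota> \<pi>" and Y: "Y \<in> Obj C"
  and g: "g \<in> Hom C Y X" and g': "g' \<in> Hom C Y X" and eq: "\<forall>k<n. comp C (\<pi> k) g = comp C (\<pi> k) g'"
  shows "g = g'"
proof -
  have c: "category C" by (rule pa_cat[OF pa])
  have X: "X \<in> Obj C" and m: "\<forall>k<n. A k \<in> Obj C \<and> \<iota> k \<in> Hom C (A k) X \<and> \<pi> k \<in> Hom C X (A k)"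
    and sm: "hsum C X X (\<lambda>k. comp C (\<iota> k) (\<pi> k)) n = idm C X"
    using ds unfolding is_dsum_def by auto
  have ip: "\<forall>k<n. comp C (\<iota> k) (\<pi> k) \<in> Hom C X X" using m comp_hom[OF c X _ X] by blast
  have key: "h = hsum C Y X (\<lambda>k. comp C (\<iota> k) (comp C (\<pi> k) h)) n" if h: "h \<in> Hom C Y X" for h
  proof -
    have "h = comp C (idm C X) h" using id_l[OF c Y X h] by simp
    also have "\<dots> = hsum C Y X (\<lambda>k. comp C (comp C (\<iota> k) (\<pi> k)) h) n"
      using sm hsum_compr[OF pa Y X X h ip] by simp
    also have "\<dots> = hsum C Y X (\<lambda>k. comp C (\<iota> k) (comp C (\<pi> k) h)) n"
      by (rule hsum_cong) (use m cassoc[OF c Y X _ X] h in metis)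
    finally show ?thesis .
  qed
  have "g = hsum C Y X (\<lambda>k. comp C (\<iota> k) (comp C (\<pi> k) g)) n" by (rule key[OF g])
  also have "\<dots> = hsum C Y X (\<lambda>k. comp C (\<iota> k) (comp C (\<pi> k) g')) n"
    by (rule hsum_cong) (use eq in simp)
  also have "\<dots> = g'" by (rule key[OF g', symmetric])
  finally show ?thesis .
qed


section \<open>Adjunctions\<close>

lemma adj_unfold: assumes "adjunction C D F G"
  obtains \<eta> \<epsilon> where "is_functor C D F" "is_functor D C G"
        "\<forall>X\<in>Obj C. \<eta> X \<in> Hom C X (fo G (fo F X))"
        "\<forall>X\<in>Obj C. \<forall>Y\<in>Obj C. \<forall>f\<in>Hom C X Y.
            comp C (\<eta> Y) f = comp C (fm G (fm F f)) (\<eta> X)"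
        "\<forall>Y\<in>Obj D. \<epsilon> Y \<in> Hom D (fo F (fo G Y)) Y"
        "\<forall>X\<in>Obj D. \<forall>Y\<in>Obj D. \<forall>g\<in>Hom D X Y.
            comp D g (\<epsilon> X) = comp D (\<epsilon> Y) (fm F (fm G g))"
        "\<forall>X\<in>Obj C. comp D (\<epsilon> (fo F X)) (fm F (\<eta> X)) = idm D (fo F X)"
        "\<forall>Y\<in>Obj D. comp C (fm G (\<epsilon> Y)) (\<eta> (fo G Y)) = idm C (fo G Y)"
  using assms unfolding adjunction_def by (elim conjE exE) blast

lemma adj_det_l: assumes adj: "adjunction C D F G" and cC: "category C" and cD: "category D"
  and L: "L \<in> Obj C" and Y: "Y \<in> Obj D"
  and p: "\<phi> \<in> Hom D (fo F L) Y" and p': "\<phi>' \<in> Hom D (fo F L) Y" and eq: "fm G \<phi> = fm G \<phi>'"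
  shows "\<phi> = \<phi>'"
proof -
  obtain \<eta> \<epsilon> where F: "is_functor C D F" and G: "is_functor D C G"
    and \<eta>: "\<forall>X\<in>Obj C. \<eta> X \<in> Hom C X (fo G (fo F X))"
    and \<epsilon>: "\<forall>Y\<in>Obj D. \<epsilon> Y \<in> Hom D (fo F (fo G Y)) Y"
    and n\<epsilon>: "\<forall>X\<in>Obj D. \<forall>Y\<in>Obj D. \<forall>g\<in>Hom D X Y.
            comp D g (\<epsilon> X) = comp D (\<epsilon> Y) (fm F (fm G g))"
    and t1: "\<forall>X\<in>Obj C. comp D (\<epsilon> (fo F X)) (fm F (\<eta> X)) = idm D (fo F X)"
    using adj_unfold[OF adj] by metis
  have FL: "fo F L \<in> Obj D" by (rule f_obj[OF F L])
  have GFL: "fo G (fo F L) \<in> Obj C" by (rule f_obj[OF G FL])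
  have GY: "fo G Y \<in> Obj C" by (rule f_obj[OF G Y])
  have FGY: "fo F (fo G Y) \<in> Obj D" by (rule f_obj[OF F GY])
  have FGFL: "fo F (fo G (fo F L)) \<in> Obj D" by (rule f_obj[OF F GFL])
  have eL: "\<eta> L \<in> Hom C L (fo G (fo F L))" using \<eta> L by blast
  have FeL: "fm F (\<eta> L) \<in> Hom D (fo F L) (fo F (fo G (fo F L)))" by (rule f_hom[OF F L GFL eL])
  have eY: "\<epsilon> Y \<in> Hom D (fo F (fo G Y)) Y" using \<epsilon> Y by blast
  have key: "\<psi> = comp D (\<epsilon> Y) (fm F (comp C (fm G \<psi>) (\<eta> L)))" if ps: "\<psi> \<in> Hom D (fo F L) Y" for \<psi>
  proof -
    have Gp: "fm G \<psi> \<in> Hom C (fo G (fo F L)) (fo G Y)" by (rule f_hom[OF G FL Y ps])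
    have FGp: "fm F (fm G \<psi>) \<in> Hom D (fo F (fo G (fo F L))) (fo F (fo G Y))" by (rule f_hom[OF F GFL GY Gp])
    have "comp D (\<epsilon> Y) (fm F (comp C (fm G \<psi>) (\<eta> L))) = comp D (\<epsilon> Y) (comp D (fm F (fm G \<psi>)) (fm F (\<eta> L)))"
      using f_comp[OF F L GFL GY eL Gp] by simp
    also have "\<dots> = comp D (comp D (\<epsilon> Y) (fm F (fm G \<psi>))) (fm F (\<eta> L))"
      by (rule cassoc[OF cD FL FGFL FGY Y FeL FGp eY])
    also have "comp D (\<epsilon> Y) (fm F (fm G \<psi>)) = comp D \<psi> (\<epsilon> (fo F L))" using n\<epsilon> FL Y ps by metis
    also have "comp D (comp D \<psi> (\<epsilon> (fo F L))) (fm F (\<eta> L)) = comp D \<psi> (comp D (\<epsilon> (fo F L)) (fm F (\<eta> L)))"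
      using cassoc[OF cD FL FGFL FL Y FeL _ ps] \<epsilon> FL by metis
    also have "\<dots> = \<psi>" using t1 L id_r[OF cD FL Y ps] by simp
    finally show ?thesis by simp
  qed
  show ?thesis using key[OF p] key[OF p'] eq by metis
qed

lemma adj_det_r: assumes adj: "adjunction C D F G" and cC: "category C" and cD: "category D"
  and L: "L \<in> Obj D" and Y: "Y \<in> Obj C"
  and p: "\<phi> \<in> Hom C Y (fo G L)" and p': "\<phi>' \<in> Hom C Y (fo G L)" and eq: "fm F \<phi> = fm F \<phi>'"
  shows "\<phi> = \<phi>'"
proof -
  obtain \<eta> \<epsilon> where F: "is_functor C D F" and G: "is_functor D C G"
    and \<eta>: "\<forall>X\<in>Obj C. \<eta> X \<in> Hom C X (fo G (fo F X))"
    and n\<eta>: "\<forall>X\<in>Obj C. \<forall>Y\<in>Obj C. \<forall>f\<in>Hom C X Y.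
            comp C (\<eta> Y) f = comp C (fm G (fm F f)) (\<eta> X)"
    and \<epsilon>: "\<forall>Y\<in>Obj D. \<epsilon> Y \<in> Hom D (fo F (fo G Y)) Y"
    and t2: "\<forall>Y\<in>Obj D. comp C (fm G (\<epsilon> Y)) (\<eta> (fo G Y)) = idm C (fo G Y)"
    using adj_unfold[OF adj] by metis
  have GL: "fo G L \<in> Obj C" by (rule f_obj[OF G L])
  have FGL: "fo F (fo G L) \<in> Obj D" by (rule f_obj[OF F GL])
  have GFGL: "fo G (fo F (fo G L)) \<in> Obj C" by (rule f_obj[OF G FGL])
  have FY: "fo F Y \<in> Obj D" by (rule f_obj[OF F Y])
  have GFY: "fo G (fo F Y) \<in> Obj C" by (rule f_obj[OF G FY])
  have eY: "\<eta> Y \<in> Hom C Y (fo G (fo F Y))" using \<eta> Y by blast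
  have eGL: "\<eta> (fo G L) \<in> Hom C (fo G L) (fo G (fo F (fo G L)))" using \<eta> GL by blast
  have eL: "\<epsilon> L \<in> Hom D (fo F (fo G L)) L" using \<epsilon> L by blast
  have GeL: "fm G (\<epsilon> L) \<in> Hom C (fo G (fo F (fo G L))) (fo G L)" by (rule f_hom[OF G FGL L eL])
  have key: "\<psi> = comp C (fm G (comp D (\<epsilon> L) (fm F \<psi>))) (\<eta> Y)" if ps: "\<psi> \<in> Hom C Y (fo G L)" for \<psi>
  proof -
    have Fp: "fm F \<psi> \<in> Hom D (fo F Y) (fo F (fo G L))" by (rule f_hom[OF F Y GL ps])
    have GFp: "fm G (fm F \<psi>) \<in> Hom C (fo G (fo F Y)) (fo G (fo F (fo G L)))" by (rule f_hom[OF G FY FGL Fp])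
    have "comp C (fm G (comp D (\<epsilon> L) (fm F \<psi>))) (\<eta> Y) = comp C (comp C (fm G (\<epsilon> L)) (fm G (fm F \<psi>))) (\<eta> Y)"
      using f_comp[OF G FY FGL L Fp eL] by simp
    also have "\<dots> = comp C (fm G (\<epsilon> L)) (comp C (fm G (fm F \<psi>)) (\<eta> Y))"
      by (rule cassoc[OF cC Y GFY GFGL GL eY GFp GeL, symmetric])
    also have "comp C (fm G (fm F \<psi>)) (\<eta> Y) = comp C (\<eta> (fo G L)) \<psi>" using n\<eta> Y GL ps by metis
    also have "comp C (fm G (\<epsilon> L)) (comp C (\<eta> (fo G L)) \<psi>) = comp C (comp C (fm G (\<epsilon> L)) (\<eta> (fo G L))) \<psi>"
      by (rule cassoc[OF cC Y GL GFGL GL ps eGL GeL])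
    also have "\<dots> = \<psi>" using t2 L id_l[OF cC Y GL ps] by simp
    finally show ?thesis by simp
  qed
  show ?thesis using key[OF p] key[OF p'] eq by metis
qed


lemma step32: assumes pa: "preadditive SC" and Sf: "is_functor TC SC S"
  and ex: "\<exists>L\<in>Obj TC. direct_factor SC M (fo S L)"
  shows "in_add_im TC SC S M"
proof -
  have c: "category SC" by (rule pa_cat[OF pa])
  obtain L where L: "L \<in> Obj TC" and df: "direct_factor SC M (fo S L)" using ex by blast
  have SL: "fo S L \<in> Obj SC" by (rule f_obj[OF Sf L])
  have i: "idm SC (fo S L) \<in> Hom SC (fo S L) (fo S L)" by (rule id_hom[OF c SL])
  have ii: "comp SC (idm SC (fo S L)) (idm SC (fo S L)) = idm SC (fo S L)" by (rule id_l[OF c SL SL i])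
  have "hsum SC (fo S L) (fo S L) (\<lambda>k. comp SC (idm SC (fo S L)) (idm SC (fo S L))) 1 = idm SC (fo S L)"
    using ii zero_add[OF pa SL SL i] by simp
  then have "is_dsum SC (fo S L) (\<lambda>k. fo S ((\<lambda>_. L) k)) 1 (\<lambda>_. idm SC (fo S L)) (\<lambda>_. idm SC (fo S L))"
    unfolding is_dsum_def using SL i ii by simp
  then have H: "(\<forall>k<1. (\<lambda>_. L) k \<in> Obj TC) \<and>
      is_dsum SC (fo S L) (\<lambda>k. fo S ((\<lambda>_. L) k)) 1 (\<lambda>_. idm SC (fo S L)) (\<lambda>_. idm SC (fo S L)) \<and>
      direct_factor SC M (fo S L)" using L df by simp
  show ?thesis unfolding in_add_im_def
    by (rule exI[of _ 1], rule exI[of _ "\<lambda>_. L"], rule exI[of _ "fo S L"],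
        rule exI[of _ "\<lambda>_. idm SC (fo S L)"], rule exI[of _ "\<lambda>_. idm SC (fo S L)"], rule H)
qed

lemma left14: assumes tS: "triangulated SC" and tT: "triangulated TC" and TF: "additive_functor SC TC T"
  and adj: "adjunction TC SC S T" and M: "M \<in> Obj SC" and rp: "rel_projective SC T M"
  shows "direct_factor SC M (fo S (fo T M))"
proof -
  have cS: "category SC" by (rule tri_cat[OF tS])
  have cT: "category TC" by (rule tri_cat[OF tT])
  have paS: "preadditive SC" by (rule tri_pa[OF tS])
  have paT: "preadditive TC" by (rule tri_pa[OF tT])
  obtain \<eta> \<epsilon> where Sf: "is_functor TC SC S" and Tf: "is_functor SC TC T"
    and \<eta>: "\<forall>X\<in>Obj TC. \<eta> X \<in> Hom TC X (fo T (fo S X))"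
    and \<epsilon>: "\<forall>Y\<in>Obj SC. \<epsilon> Y \<in> Hom SC (fo S (fo T Y)) Y"
    and t2: "\<forall>Y\<in>Obj SC. comp TC (fm T (\<epsilon> Y)) (\<eta> (fo T Y)) = idm TC (fo T Y)"
    using adj_unfold[OF adj] by metis
  have TM: "fo T M \<in> Obj TC" by (rule f_obj[OF Tf M])
  have STM: "fo S (fo T M) \<in> Obj SC" by (rule f_obj[OF Sf TM])
  have TSTM: "fo T (fo S (fo T M)) \<in> Obj TC" by (rule f_obj[OF Tf STM])
  have eM: "\<epsilon> M \<in> Hom SC (fo S (fo T M)) M" using \<epsilon> M by blast
  have eTM: "\<eta> (fo T M) \<in> Hom TC (fo T M) (fo T (fo S (fo T M)))" using \<eta> TM by blast
  have TeM: "fm T (\<epsilon> M) \<in> Hom TC (fo T (fo S (fo T M))) (fo T M)" by (rule f_hom[OF Tf STM M eM])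
  obtain Z g h where d: "(fo S (fo T M), M, Z, \<epsilon> M, g, h) \<in> dist SC" using tr1b[OF tS STM M eM] by blast
  from dist_tri[OF tS d] have Z: "Z \<in> Obj SC" and g: "g \<in> Hom SC M Z" by auto
  have TZ: "fo T Z \<in> Obj TC" by (rule f_obj[OF Tf Z])
  have Tg: "fm T g \<in> Hom TC (fo T M) (fo T Z)" by (rule f_hom[OF Tf M Z g])
  have ge: "comp SC g (\<epsilon> M) = mzero SC (fo S (fo T M)) Z" by (rule dist_comp_zero[OF tS d])
  have Tge: "comp TC (fm T g) (fm T (\<epsilon> M)) = mzero TC (fo T (fo S (fo T M))) (fo T Z)"
    using f_comp[OF Tf STM M Z eM g] ge f_zero[OF TF paS paT STM Z] by simp
  have "fm T g = comp TC (fm T g) (idm TC (fo T M))" using id_r[OF cT TM TZ Tg] by simp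
  also have "\<dots> = comp TC (fm T g) (comp TC (fm T (\<epsilon> M)) (\<eta> (fo T M)))" using t2 M by simp
  also have "\<dots> = comp TC (comp TC (fm T g) (fm T (\<epsilon> M))) (\<eta> (fo T M))"
    by (rule cassoc[OF cT TM TSTM TM TZ eTM TeM Tg])
  also have "\<dots> = mzero TC (fo T M) (fo T Z)" using Tge comp_zero_l[OF paT TM TSTM TZ eTM] by simp
  also have "\<dots> = fm T (mzero SC M Z)" using f_zero[OF TF paS paT M Z] by simp
  finally have "fm T g = fm T (mzero SC M Z)" .
  then have g0: "g = mzero SC M Z"
    using rp Z g zero_hom[OF paS M Z] unfolding rel_projective_def inj_on_def by blast
  have "comp SC g (idm SC M) = mzero SC M Z" using g0 id_r[OF cS M Z g] by simp
  then obtain s where s: "s \<in> Hom SC M (fo S (fo T M))" "comp SC (\<epsilon> M) s = idm SC M"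
    using weak_ker[OF tS d M id_hom[OF cS M]] by blast
  show ?thesis by (rule split_df[OF tS M STM s(1) eM s(2)])
qed

lemma right14: assumes tS: "triangulated SC" and tT: "triangulated TC" and TF: "additive_functor SC TC T"
  and adj: "adjunction SC TC T S" and M: "M \<in> Obj SC" and ri: "rel_injective SC T M"
  shows "direct_factor SC M (fo S (fo T M))"
proof -
  have cS: "category SC" by (rule tri_cat[OF tS])
  have cT: "category TC" by (rule tri_cat[OF tT])
  have paS: "preadditive SC" by (rule tri_pa[OF tS])
  have paT: "preadditive TC" by (rule tri_pa[OF tT])
  obtain \<eta> \<epsilon> where Tf: "is_functor SC TC T" and Sf: "is_functor TC SC S"
    and \<eta>: "\<forall>X\<in>Obj SC. \<eta> X \<in> Hom SC X (fo S (fo T X))"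
    and \<epsilon>: "\<forall>Y\<in>Obj TC. \<epsilon> Y \<in> Hom TC (fo T (fo S Y)) Y"
    and t1: "\<forall>X\<in>Obj SC. comp TC (\<epsilon> (fo T X)) (fm T (\<eta> X)) = idm TC (fo T X)"
    using adj_unfold[OF adj] by metis
  have TM: "fo T M \<in> Obj TC" by (rule f_obj[OF Tf M])
  have STM: "fo S (fo T M) \<in> Obj SC" by (rule f_obj[OF Sf TM])
  have TSTM: "fo T (fo S (fo T M)) \<in> Obj TC" by (rule f_obj[OF Tf STM])
  have eM: "\<eta> M \<in> Hom SC M (fo S (fo T M))" using \<eta> M by blast
  have eTM: "\<epsilon> (fo T M) \<in> Hom TC (fo T (fo S (fo T M))) (fo T M)" using \<epsilon> TM by blast
  have TeM: "fm T (\<eta> M) \<in> Hom TC (fo T M) (fo T (fo S (fo T M)))" by (rule f_hom[OF Tf M STM eM])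
  obtain W k h where d: "(W, M, fo S (fo T M), k, \<eta> M, h) \<in> dist SC" using tri_pre[OF tS M STM eM] by blast
  from dist_tri[OF tS d] have W: "W \<in> Obj SC" and k: "k \<in> Hom SC W M" by auto
  have TW: "fo T W \<in> Obj TC" by (rule f_obj[OF Tf W])
  have Tk: "fm T k \<in> Hom TC (fo T W) (fo T M)" by (rule f_hom[OF Tf W M k])
  have ek: "comp SC (\<eta> M) k = mzero SC W (fo S (fo T M))" by (rule dist_comp_zero[OF tS d])
  have Tek: "comp TC (fm T (\<eta> M)) (fm T k) = mzero TC (fo T W) (fo T (fo S (fo T M)))"
    using f_comp[OF Tf W M STM k eM] ek f_zero[OF TF paS paT W STM] by simp
  have "fm T k = comp TC (idm TC (fo T M)) (fm T k)" using id_l[OF cT TW TM Tk] by simp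
  also have "\<dots> = comp TC (comp TC (\<epsilon> (fo T M)) (fm T (\<eta> M))) (fm T k)" using t1 M by simp
  also have "\<dots> = comp TC (\<epsilon> (fo T M)) (comp TC (fm T (\<eta> M)) (fm T k))"
    by (rule cassoc[OF cT TW TM TSTM TM Tk TeM eTM, symmetric])
  also have "\<dots> = mzero TC (fo T W) (fo T M)" using Tek comp_zero_r[OF paT TW TSTM TM eTM] by simp
  also have "\<dots> = fm T (mzero SC W M)" using f_zero[OF TF paS paT W M] by simp
  finally have "fm T k = fm T (mzero SC W M)" .
  then have k0: "k = mzero SC W M"
    using ri W k zero_hom[OF paS W M] unfolding rel_injective_def inj_on_def by blast
  have "comp SC (idm SC M) k = mzero SC W M" using k0 id_l[OF cS W M k] by simp
  then obtain t where t: "t \<in> Hom SC (fo S (fo T M)) M" "comp SC t (\<eta> M) = idm SC M"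
    using weak_coker[OF tS d M id_hom[OF cS M]] by blast
  show ?thesis by (rule split_df[OF tS M STM eM t(1) t(2)])
qed


lemma left21: assumes tS: "triangulated SC" and tT: "triangulated TC" and TF: "additive_functor SC TC T"
  and adj: "adjunction TC SC S T" and M: "M \<in> Obj SC" and ai: "in_add_im TC SC S M"
  shows "rel_projective SC T M"
proof -
  have cS: "category SC" by (rule tri_cat[OF tS])
  have cT: "category TC" by (rule tri_cat[OF tT])
  have paS: "preadditive SC" by (rule tri_pa[OF tS])
  have Tf: "is_functor SC TC T" by (rule af_f[OF TF])
  have Sf: "is_functor TC SC S" using adj unfolding adjunction_def by blast
  obtain n L X \<iota> \<pi> where L: "\<forall>k<n. L k \<in> Obj TC" and ds: "is_dsum SC X (\<lambda>k. fo S (L k)) n \<iota> \<pi>"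
    and df: "direct_factor SC M X" using ai unfolding in_add_im_def by blast
  obtain N i p j q where bp: "biprod SC X M N i p j q" using df unfolding direct_factor_def by blast
  have X: "X \<in> Obj SC" and i: "i \<in> Hom SC M X" and p: "p \<in> Hom SC X M" and pi: "comp SC p i = idm SC M"
    using bp unfolding biprod_def by auto
  have m: "\<forall>k<n. \<iota> k \<in> Hom SC (fo S (L k)) X" using ds unfolding is_dsum_def by auto
  show ?thesis unfolding rel_projective_def
  proof (intro ballI inj_onI)
    fix Y f f' assume Y: "Y \<in> Obj SC" and f: "f \<in> Hom SC M Y" and f': "f' \<in> Hom SC M Y" and Tff: "fm T f = fm T f'"
    have fp: "comp SC f p \<in> Hom SC X Y" by (rule comp_hom[OF cS X M Y p f])
    have f'p: "comp SC f' p \<in> Hom SC X Y" by (rule comp_hom[OF cS X M Y p f'])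
    have "\<forall>k<n. comp SC (comp SC f p) (\<iota> k) = comp SC (comp SC f' p) (\<iota> k)"
    proof (intro allI impI)
      fix k assume k: "k < n"
      have Lk: "L k \<in> Obj TC" using L k by blast
      have SLk: "fo S (L k) \<in> Obj SC" by (rule f_obj[OF Sf Lk])
      have ik: "\<iota> k \<in> Hom SC (fo S (L k)) X" using m k by blast
      have "fm T (comp SC (comp SC f p) (\<iota> k)) = comp TC (comp TC (fm T f) (fm T p)) (fm T (\<iota> k))"
        using f_comp[OF Tf SLk X Y ik fp] f_comp[OF Tf X M Y p f] by simp
      moreover have "fm T (comp SC (comp SC f' p) (\<iota> k)) = comp TC (comp TC (fm T f') (fm T p)) (fm T (\<iota> k))"
        using f_comp[OF Tf SLk X Y ik f'p] f_comp[OF Tf X M Y p f'] by simp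
      ultimately have "fm T (comp SC (comp SC f p) (\<iota> k)) = fm T (comp SC (comp SC f' p) (\<iota> k))" using Tff by simp
      then show "comp SC (comp SC f p) (\<iota> k) = comp SC (comp SC f' p) (\<iota> k)"
        by (rule adj_det_l[OF adj cT cS Lk Y comp_hom[OF cS SLk X Y ik fp] comp_hom[OF cS SLk X Y ik f'p]])
    qed
    then have e: "comp SC f p = comp SC f' p" by (rule dsum_ext_l[OF paS ds Y fp f'p])
    have "f = comp SC f (comp SC p i)" using pi id_r[OF cS M Y f] by simp
    also have "\<dots> = comp SC (comp SC f p) i" by (rule cassoc[OF cS M X M Y i p f])
    also have "\<dots> = comp SC (comp SC f' p) i" using e by simp
    also have "\<dots> = comp SC f' (comp SC p i)" by (rule cassoc[OF cS M X M Y i p f', symmetric])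
    also have "\<dots> = f'" using pi id_r[OF cS M Y f'] by simp
    finally show "f = f'" .
  qed
qed

lemma right21: assumes tS: "triangulated SC" and tT: "triangulated TC" and TF: "additive_functor SC TC T"
  and adj: "adjunction SC TC T S" and M: "M \<in> Obj SC" and ai: "in_add_im TC SC S M"
  shows "rel_injective SC T M"
proof -
  have cS: "category SC" by (rule tri_cat[OF tS])
  have cT: "category TC" by (rule tri_cat[OF tT])
  have paS: "preadditive SC" by (rule tri_pa[OF tS])
  have Tf: "is_functor SC TC T" by (rule af_f[OF TF])
  have Sf: "is_functor TC SC S" using adj unfolding adjunction_def by blast
  obtain n L X \<iota> \<pi> where L: "\<forall>k<n. L k \<in> Obj TC" and ds: "is_dsum SC X (\<lambda>k. fo S (L k)) n \<iota> \<pi>"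
    and df: "direct_factor SC M X" using ai unfolding in_add_im_def by blast
  obtain N i p j q where bp: "biprod SC X M N i p j q" using df unfolding direct_factor_def by blast
  have X: "X \<in> Obj SC" and i: "i \<in> Hom SC M X" and p: "p \<in> Hom SC X M" and pi: "comp SC p i = idm SC M"
    using bp unfolding biprod_def by auto
  have m: "\<forall>k<n. \<pi> k \<in> Hom SC X (fo S (L k))" using ds unfolding is_dsum_def by auto
  show ?thesis unfolding rel_injective_def
  proof (intro ballI inj_onI)
    fix Y f f' assume Y: "Y \<in> Obj SC" and f: "f \<in> Hom SC Y M" and f': "f' \<in> Hom SC Y M" and Tff: "fm T f = fm T f'"
    have fp: "comp SC i f \<in> Hom SC Y X" by (rule comp_hom[OF cS Y M X f i])
    have f'p: "comp SC i f' \<in> Hom SC Y X" by (rule comp_hom[OF cS Y M X f' i])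
    have "\<forall>k<n. comp SC (\<pi> k) (comp SC i f) = comp SC (\<pi> k) (comp SC i f')"
    proof (intro allI impI)
      fix k assume k: "k < n"
      have Lk: "L k \<in> Obj TC" using L k by blast
      have SLk: "fo S (L k) \<in> Obj SC" by (rule f_obj[OF Sf Lk])
      have pk: "\<pi> k \<in> Hom SC X (fo S (L k))" using m k by blast
      have "fm T (comp SC (\<pi> k) (comp SC i f)) = comp TC (fm T (\<pi> k)) (comp TC (fm T i) (fm T f))"
        using f_comp[OF Tf Y X SLk fp pk] f_comp[OF Tf Y M X f i] by simp
      moreover have "fm T (comp SC (\<pi> k) (comp SC i f')) = comp TC (fm T (\<pi> k)) (comp TC (fm T i) (fm T f'))"
        using f_comp[OF Tf Y X SLk f'p pk] f_comp[OF Tf Y M X f' i] by simp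
      ultimately have "fm T (comp SC (\<pi> k) (comp SC i f)) = fm T (comp SC (\<pi> k) (comp SC i f'))" using Tff by simp
      then show "comp SC (\<pi> k) (comp SC i f) = comp SC (\<pi> k) (comp SC i f')"
        by (rule adj_det_r[OF adj cS cT Lk Y comp_hom[OF cS Y X SLk fp pk] comp_hom[OF cS Y X SLk f'p pk]])
    qed
    then have e: "comp SC i f = comp SC i f'" by (rule dsum_ext_r[OF paS ds Y fp f'p])
    have "f = comp SC (comp SC p i) f" using pi id_l[OF cS Y M f] by simp
    also have "\<dots> = comp SC p (comp SC i f)" by (rule cassoc[OF cS Y M X M f i p, symmetric])
    also have "\<dots> = comp SC p (comp SC i f')" using e by simp
    also have "\<dots> = comp SC (comp SC p i) f'" by (rule cassoc[OF cS Y M X M f' i p])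
    also have "\<dots> = f'" using pi id_l[OF cS Y M f'] by simp
    finally show "f = f'" .
  qed
qed

theorem proposition2p10:
  fixes SC :: "('a,'b) tricat" and TC :: "('c,'d) tricat"
    and T :: "('a,'b,'c,'d) fnct" and S :: "('c,'d,'a,'b) fnct" and M :: 'a
  assumes "triangulated SC" and "triangulated TC"
    and "triangle_functor SC TC T"
    and "M \<in> Obj SC"
  shows "(adjunction TC SC S T \<longrightarrow>
            ((rel_projective SC T M \<longleftrightarrow> in_add_im TC SC S M) \<and>
             (in_add_im TC SC S M \<longleftrightarrow> (\<exists>L\<in>Obj TC. direct_factor SC M (fo S L))) \<and>
             ((\<exists>L\<in>Obj TC. direct_factor SC M (fo S L)) \<longleftrightarrow>
                direct_factor SC M (fo S (fo T M)))))
       \<and> (adjunction SC TC T S \<longrightarrow>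
            ((rel_injective SC T M \<longleftrightarrow> in_add_im TC SC S M) \<and>
             (in_add_im TC SC S M \<longleftrightarrow> (\<exists>L\<in>Obj TC. direct_factor SC M (fo S L))) \<and>
             ((\<exists>L\<in>Obj TC. direct_factor SC M (fo S L)) \<longleftrightarrow>
                direct_factor SC M (fo S (fo T M)))))"
proof -
  note tS = assms(1) and tT = assms(2) and M = assms(4)
  have TF: "additive_functor SC TC T" using assms(3) unfolding triangle_functor_def by blast
  have Tf: "is_functor SC TC T" by (rule af_f[OF TF])
  have paS: "preadditive SC" by (rule tri_pa[OF tS])
  have TM: "fo T M \<in> Obj TC" by (rule f_obj[OF Tf M])
  have Lc: "adjunction TC SC S T \<longrightarrow>
            ((rel_projective SC T M \<longleftrightarrow> in_add_im TC SC S M) \<and>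
             (in_add_im TC SC S M \<longleftrightarrow> (\<exists>L\<in>Obj TC. direct_factor SC M (fo S L))) \<and>
             ((\<exists>L\<in>Obj TC. direct_factor SC M (fo S L)) \<longleftrightarrow>
                direct_factor SC M (fo S (fo T M))))"
  proof
    assume adj: "adjunction TC SC S T"
    have Sf: "is_functor TC SC S" using adj unfolding adjunction_def by blast
    have i14: "rel_projective SC T M \<Longrightarrow> direct_factor SC M (fo S (fo T M))"
      by (rule left14[OF tS tT TF adj M])
    have i43: "direct_factor SC M (fo S (fo T M)) \<Longrightarrow> \<exists>L\<in>Obj TC. direct_factor SC M (fo S L)"
      using TM by blast
    have i32: "(\<exists>L\<in>Obj TC. direct_factor SC M (fo S L)) \<Longrightarrow> in_add_im TC SC S M"
      by (rule step32[OF paS Sf])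
    have i21: "in_add_im TC SC S M \<Longrightarrow> rel_projective SC T M"
      by (rule left21[OF tS tT TF adj M])
    show "(rel_projective SC T M \<longleftrightarrow> in_add_im TC SC S M) \<and>
             (in_add_im TC SC S M \<longleftrightarrow> (\<exists>L\<in>Obj TC. direct_factor SC M (fo S L))) \<and>
             ((\<exists>L\<in>Obj TC. direct_factor SC M (fo S L)) \<longleftrightarrow>
                direct_factor SC M (fo S (fo T M)))"
      using i14 i43 i32 i21 by blast
  qed
  have Rc: "adjunction SC TC T S \<longrightarrow>
            ((rel_injective SC T M \<longleftrightarrow> in_add_im TC SC S M) \<and>
             (in_add_im TC SC S M \<longleftrightarrow> (\<exists>L\<in>Obj TC. direct_factor SC M (fo S L))) \<and>
             ((\<exists>L\<in>Obj TC. direct_factor SC M (fo S L)) \<longleftrightarrow>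
                direct_factor SC M (fo S (fo T M))))"
  proof
    assume adj: "adjunction SC TC T S"
    have Sf: "is_functor TC SC S" using adj unfolding adjunction_def by blast
    have i14: "rel_injective SC T M \<Longrightarrow> direct_factor SC M (fo S (fo T M))"
      by (rule right14[OF tS tT TF adj M])
    have i43: "direct_factor SC M (fo S (fo T M)) \<Longrightarrow> \<exists>L\<in>Obj TC. direct_factor SC M (fo S L)"
      using TM by blast
    have i32: "(\<exists>L\<in>Obj TC. direct_factor SC M (fo S L)) \<Longrightarrow> in_add_im TC SC S M"
      by (rule step32[OF paS Sf])
    have i21: "in_add_im TC SC S M \<Longrightarrow> rel_injective SC T M"
      by (rule right21[OF tS tT TF adj M])
    show "(rel_injective SC T M \<longleftrightarrow> in_add_im TC SC S M) \<and>
             (in_add_im TC SC S M \<longleftrightarrow> (\<exists>L\<in>Obj TC. direct_factor SC M (fo S L))) \<and>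
             ((\<exists>L\<in>Obj TC. direct_factor SC M (fo S L)) \<longleftrightarrow>
                direct_factor SC M (fo S (fo T M)))"
      using i14 i43 i32 i21 by blast
  qed
  show ?thesis using Lc Rc by blast
qed

end
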